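(* Consider the decentralized setting of the context. Assume the maximum delay is bounded by $\tau$ and that all loss functions $f^i_t$ are $G$-Lipschitz with respect to $\|\cdot\|$. For any $p\in\mathcal X$ with $h(p)\le r^2$, running D-DDA with constant stepsize \[\eta^i_t\equiv\eta=\frac{r}{G\bar M\sqrt{(2\tau+1)T}}\] guarantees, for any choice of reference indices $j_t\in\{1,\dots,M_t\}$, \[R^{g}_T(p)\le 2rG\bar M\sqrt{(2\tau+1)T}=O(\bar M\sqrt{\tau T}).\]
   Context: Let $\mathcal V$ be a finite-dimensional real vector space with norm $\|\cdot\|$ and dual norm $\|\cdot\|_*$, and $\mathcal X\subset\mathcal V$ closed convex. A regularizer $h:\mathcal V\to\mathbb R\cup\{+\infty\}$ is lower semicontinuous, $1$-strongly convex w.r.t. $\|\cdot\|$ on $\mathcal X$, with $\mathcal X\subset\operatorname{dom}h$, whose subdifferential admits a continuous selection, and $h\ge0$. Decentralized protocol: at each time $t=1,\dots,T$, $M_t\ge1$ agents are active, labelled $1,\dots,M_t$; agent $i$ plays $x^i_t\in\mathcal X$ against a convex loss $f^i_t$ (with $\mathcal X\subset\operatorname{dom}\partial f^i_t$) and the subgradient $g^i_t\in\partial f^i_t(x^i_t)$ is later shared. $\mathcal S^i_t\subset\{(j,s):1\le s\le t-1,\ 1\le j\le M_s\}$ is the set of (agent, time) indices of the feedback available for playing $x^i_t$. D-DDA: $x^i_t=\arg\min_{x\in\mathcal X}\{\sum_{(j,s)\in\mathcal S^i_t}\langle g^j_s,x\rangle+h(x)/\eta^i_t\}$. Maximum delay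 bounded by $\tau$: for all $t$, $i$, every $s\le t-\tau-1$ and $j\le M_s$, $(j,s)\in\mathcal S^i_t$. $\bar M=\sqrt{\frac1T\sum_{t=1}^TM_t^2}$. Collective regret with reference agents $j_t$: $R^{g}_T(p)=\sum_{t=1}^T\sum_{i=1}^{M_t}f^i_t(x^{j_t}_t)-\sum_{t=1}^T\sum_{i=1}^{M_t}f^i_t(p)$. *)

theory Defs
  imports "HOL-Analysis.Analysis" "HOL-Library.Extended_Real"
begin

text \<open>The finite-dimensional real vector space V is modelled by a type 'v of class
euclidean_space; its inner product is used only to identify V* with V (dual pairing).
The norm of the paper is an arbitrary norm N, not the Euclidean one.\<close>

definition is_norm :: "('v::real_vector \<Rightarrow> real) \<Rightarrow> bool" where
  "is_norm N \<longleftrightarrow> (\<forall>x y. N (x + y) \<le> N x + N y) \<and> (\<forall>c x. N (c *\<^sub>R x) = \<bar>c\<bar> * N x)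
     \<and> (\<forall>x. N x = 0 \<longleftrightarrow> x = 0)"

definition dual_norm :: "('v::real_inner \<Rightarrow> real) \<Rightarrow> 'v \<Rightarrow> real" where
  "dual_norm N g = Sup {g \<bullet> x | x. N x \<le> 1}"

definition subgrad :: "('v::real_inner \<Rightarrow> real) \<Rightarrow> 'v \<Rightarrow> 'v set" where
  "subgrad f x = {g. \<forall>y. f x + g \<bullet> (y - x) \<le> f y}"

definition edom :: "('v \<Rightarrow> ereal) \<Rightarrow> 'v set" where
  "edom h = {x. h x < \<infinity>}"

definition esubgrad :: "('v::real_inner \<Rightarrow> ereal) \<Rightarrow> 'v \<Rightarrow> 'v set" where
  "esubgrad h x = {g. \<bar>h x\<bar> \<noteq> (\<infinity>::ereal) \<and> (\<forall>y. h x + ereal (g \<bullet> (y - x)) \<le> h y)}"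

definition lsc_fun :: "('v::topological_space \<Rightarrow> ereal) \<Rightarrow> bool" where
  "lsc_fun h \<longleftrightarrow> (\<forall>x. \<forall>c. c < h x \<longrightarrow> eventually (\<lambda>y. c < h y) (at x))"

definition strongly_convex_on :: "'v::real_vector set \<Rightarrow> ('v \<Rightarrow> real) \<Rightarrow> ('v \<Rightarrow> ereal) \<Rightarrow> bool" where
  "strongly_convex_on X N h \<longleftrightarrow> (\<forall>x\<in>X. \<forall>y\<in>X. \<forall>\<theta>::real. 0 \<le> \<theta> \<and> \<theta> \<le> 1 \<longrightarrow>
      h (\<theta> *\<^sub>R x + (1 - \<theta>) *\<^sub>R y) \<le>
      ereal \<theta> * h x + ereal (1 - \<theta>) * h y - ereal (\<theta> * (1 - \<theta>) / 2 * (N (x - y))\<^sup>2))"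

definition has_continuous_subgrad_selection :: "('v::euclidean_space \<Rightarrow> ereal) \<Rightarrow> bool" where
  "has_continuous_subgrad_selection h \<longleftrightarrow>
     (\<exists>s. continuous_on {x. esubgrad h x \<noteq> {}} s \<and> (\<forall>x. esubgrad h x \<noteq> {} \<longrightarrow> s x \<in> esubgrad h x))"

definition lipschitz_wrt :: "('v \<Rightarrow> real) \<Rightarrow> real \<Rightarrow> ('v::real_vector \<Rightarrow> real) \<Rightarrow> bool" where
  "lipschitz_wrt N G f \<longleftrightarrow> (\<forall>x y. \<bar>f x - f y\<bar> \<le> G * N (x - y))"

definition feedback_ok :: "(nat \<Rightarrow> nat) \<Rightarrow> nat \<Rightarrow> (nat \<times> nat) set \<Rightarrow> bool" where
  "feedback_ok M t S \<longleftrightarrow> S \<subseteq> {(j, s). 1 \<le> s \<and> s + 1 \<le> t \<and> 1 \<le> j \<and> j \<le> M s}"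

definition dda_argmin :: "'v::real_inner set \<Rightarrow> ('v \<Rightarrow> ereal) \<Rightarrow> real \<Rightarrow> (nat \<Rightarrow> nat \<Rightarrow> 'v)
     \<Rightarrow> (nat \<times> nat) set \<Rightarrow> 'v \<Rightarrow> bool" where
  "dda_argmin X h \<eta> g S x \<longleftrightarrow> x \<in> X \<and>
     (\<forall>y\<in>X. ereal (\<Sum>(j, s)\<in>S. g s j \<bullet> x) + h x / ereal \<eta>
             \<le> ereal (\<Sum>(j, s)\<in>S. g s j \<bullet> y) + h y / ereal \<eta>)"

definition Mbar :: "(nat \<Rightarrow> nat) \<Rightarrow> nat \<Rightarrow> real" where
  "Mbar M T = sqrt ((1 / real T) * (\<Sum>t=1..T. (real (M t))\<^sup>2))"

end

theory Submission
  imports Defs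
begin


lemma isn_scale: "is_norm N \<Longrightarrow> N (c *\<^sub>R x) = \<bar>c\<bar> * N x"
  by (simp add: is_norm_def)
lemma isn_tri: "is_norm N \<Longrightarrow> N (x + y) \<le> N x + N y"
  by (simp add: is_norm_def)
lemma isn_zero_iff: "is_norm N \<Longrightarrow> N x = 0 \<longleftrightarrow> x = 0"
  by (simp add: is_norm_def)
lemma isn_zero: "is_norm N \<Longrightarrow> N 0 = 0"
  using isn_zero_iff by blast
lemma isn_neg: "is_norm N \<Longrightarrow> N (- x) = N x"
  using isn_scale[of N "-1" x] by simp
lemma isn_nn: "is_norm N \<Longrightarrow> 0 \<le> N x"
proof -
  assume n: "is_norm N"
  have "N (x + - x) \<le> N x + N (-x)" using isn_tri[OF n] .
  then show ?thesis using isn_zero[OF n] isn_neg[OF n] by simp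
qed
lemma isn_commute: "is_norm N \<Longrightarrow> N (x - y) = N (y - x)"
  using isn_neg[of N "x - y"] by simp
lemma isn_diff_abs: "is_norm N \<Longrightarrow> \<bar>N x - N y\<bar> \<le> N (x - y)"
proof -
  assume n: "is_norm N"
  have "N x \<le> N (x - y) + N y" using isn_tri[OF n, of "x - y" y] by simp
  moreover have "N y \<le> N (y - x) + N x" using isn_tri[OF n, of "y - x" x] by simp
  ultimately show ?thesis using isn_commute[OF n, of x y] by linarith
qed
lemma isn_sum: assumes n: "is_norm N" and fin: "finite A"
  shows "N (\<Sum>a\<in>A. f a) \<le> (\<Sum>a\<in>A. N (f a))"
  using fin
proof (induction A rule: finite_induct)
  case empty then show ?case by (simp add: isn_zero[OF n])
next
  case (insert a A)
  then show ?case using isn_tri[OF n, of "f a" "sum f A"] by simp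
qed

lemma isn_upper:
  fixes N :: "'v::euclidean_space \<Rightarrow> real"
  assumes n: "is_norm N"
  shows "N v \<le> (\<Sum>b\<in>Basis. N b) * norm v"
proof -
  have "N v = N (\<Sum>b\<in>Basis. (v \<bullet> b) *\<^sub>R b)" by (simp add: euclidean_representation)
  also have "\<dots> \<le> (\<Sum>b\<in>Basis. N ((v \<bullet> b) *\<^sub>R b))" by (rule isn_sum[OF n]) simp
  also have "\<dots> = (\<Sum>b\<in>Basis. \<bar>v \<bullet> b\<bar> * N b)" by (simp add: isn_scale[OF n])
  also have "\<dots> \<le> (\<Sum>b\<in>Basis. norm v * N b)"
    by (rule sum_mono) (simp add: Basis_le_norm isn_nn[OF n] mult_right_mono)
  also have "\<dots> = (\<Sum>b\<in>Basis. N b) * norm v" by (simp add: sum_distrib_left mult.commute)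
  finally show ?thesis .
qed

lemma isn_cont:
  fixes N :: "'v::euclidean_space \<Rightarrow> real"
  assumes n: "is_norm N"
  shows "continuous_on S N"
proof -
  let ?K = "\<Sum>b\<in>Basis. N (b::'v)"
  have "?K-lipschitz_on S N"
  proof (rule lipschitz_onI)
    fix x y assume "x \<in> S" "y \<in> S"
    have "dist (N x) (N y) = \<bar>N x - N y\<bar>" by (simp add: dist_real_def)
    also have "\<dots> \<le> N (x - y)" by (rule isn_diff_abs[OF n])
    also have "\<dots> \<le> ?K * norm (x - y)" by (rule isn_upper[OF n])
    finally show "dist (N x) (N y) \<le> ?K * dist x y" by (simp add: dist_norm)
  next
    show "0 \<le> ?K" by (simp add: isn_nn[OF n] sum_nonneg)
  qed
  then show ?thesis by (rule lipschitz_on_continuous_on)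
qed

lemma isn_lower:
  fixes N :: "'v::euclidean_space \<Rightarrow> real"
  assumes n: "is_norm N"
  shows "\<exists>c>0. \<forall>v. c * norm v \<le> N v"
proof -
  obtain b :: 'v where b: "b \<in> Basis" using nonempty_Basis by blast
  have ne: "sphere (0::'v) 1 \<noteq> {}" using b by (auto simp: norm_Basis)
  obtain xm where xm: "xm \<in> sphere (0::'v) 1" and mn: "\<forall>y\<in>sphere 0 1. N xm \<le> N y"
    using continuous_attains_inf[OF compact_sphere ne isn_cont[OF n]] by blast
  have "xm \<noteq> 0" using xm by auto
  then have pos: "N xm > 0" using isn_nn[OF n, of xm] isn_zero_iff[OF n, of xm] by linarith
  show ?thesis
  proof (intro exI[of _ "N xm"] conjI allI pos)
    fix v :: 'v
    show "N xm * norm v \<le> N v"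
    proof (cases "v = 0")
      case True then show ?thesis by (simp add: isn_zero[OF n])
    next
      case False
      let ?u = "(1 / norm v) *\<^sub>R v"
      have "?u \<in> sphere 0 1" using False by (simp add: norm_scaleR)
      then have "N xm \<le> N ?u" using mn by blast
      also have "N ?u = N v / norm v" by (simp add: isn_scale[OF n])
      finally show ?thesis using False by (simp add: field_simps)
    qed
  qed
qed

locale dda_reg =
  fixes N :: "'v::euclidean_space \<Rightarrow> real" and X :: "'v set" and h :: "'v \<Rightarrow> ereal" and \<eta> :: real
  assumes nrm: "is_norm N" and Xc: "closed X" and Xv: "convex X" and lsc: "lsc_fun h"
   and sc: "strongly_convex_on X N h" and dom: "X \<subseteq> edom h" and hnn: "\<And>y. h y \<ge> 0"
   and eta: "\<eta> > 0" and Xne: "X \<noteq> {}"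
begin

definition hr where "hr z = real_of_ereal (h z)"
definition F where "F a z = a \<bullet> z + hr z / \<eta>"
definition ismin where "ismin a x \<longleftrightarrow> x \<in> X \<and> (\<forall>z\<in>X. F a x \<le> F a z)"

lemma h_fin: "z \<in> X \<Longrightarrow> h z = ereal (hr z)"
proof -
  assume "z \<in> X"
  then have "h z < \<infinity>" using dom by (auto simp: edom_def)
  moreover have "h z \<ge> 0" by (rule hnn)
  ultimately show ?thesis unfolding hr_def by (cases "h z") auto
qed

lemma hr_nn: "0 \<le> hr z"
  unfolding hr_def by (rule real_of_ereal_pos[OF hnn])

lemma sc_real:
  assumes x: "x \<in> X" and y: "y \<in> X" and t0: "0 \<le> \<theta>" and t1: "\<theta> \<le> 1"
  shows "hr (\<theta> *\<^sub>R x + (1 - \<theta>) *\<^sub>R y) \<le> \<theta> * hr x + (1 - \<theta>) * hr y - \<theta> * (1 - \<theta>) / 2 * (N (x - y))\<^sup>2"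
proof -
  have w: "\<theta> *\<^sub>R x + (1 - \<theta>) *\<^sub>R y \<in> X"
    using Xv x y t0 t1 unfolding convex_def by auto
  have "h (\<theta> *\<^sub>R x + (1 - \<theta>) *\<^sub>R y) \<le>
      ereal \<theta> * h x + ereal (1 - \<theta>) * h y - ereal (\<theta> * (1 - \<theta>) / 2 * (N (x - y))\<^sup>2)"
    using sc x y t0 t1 unfolding strongly_convex_on_def by blast
  then show ?thesis using h_fin[OF w] h_fin[OF x] h_fin[OF y] by simp
qed

lemma growth:
  assumes m: "ismin a x" and z: "z \<in> X"
  shows "F a x + (N (z - x))\<^sup>2 / (2 * \<eta>) \<le> F a z"
proof -
  have x: "x \<in> X" using m by (simp add: ismin_def)
  define q where "q = (N (z - x))\<^sup>2 / (2 * \<eta>)"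
  have q0: "q \<ge> 0" using eta by (simp add: q_def)
  have key: "F a x + q \<le> F a z + \<theta> * q" if t0: "0 < \<theta>" and t1: "\<theta> \<le> 1" for \<theta>
  proof -
    define w where "w = \<theta> *\<^sub>R z + (1 - \<theta>) *\<^sub>R x"
    have w: "w \<in> X" using Xv x z t0 t1 unfolding convex_def w_def by auto
    have "F a x \<le> F a w" using m w by (simp add: ismin_def)
    also have "F a w = \<theta> * (a \<bullet> z) + (1 - \<theta>) * (a \<bullet> x) + hr w / \<eta>"
      by (simp add: F_def w_def inner_add_right)
    also have "hr w / \<eta> \<le> (\<theta> * hr z + (1 - \<theta>) * hr x - \<theta> * (1 - \<theta>) / 2 * (N (z - x))\<^sup>2) / \<eta>"
      using sc_real[OF z x less_imp_le[OF t0] t1] eta unfolding w_def by (simp add: divide_right_mono)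
    finally have "F a x \<le> \<theta> * (a \<bullet> z) + (1 - \<theta>) * (a \<bullet> x) +
        (\<theta> * hr z + (1 - \<theta>) * hr x - \<theta> * (1 - \<theta>) / 2 * (N (z - x))\<^sup>2) / \<eta>" by simp
    also have "\<dots> = \<theta> * F a z + (1 - \<theta>) * F a x - \<theta> * ((1 - \<theta>) * q)"
      using eta by (simp add: F_def q_def field_simps)
    finally have "\<theta> * F a x \<le> \<theta> * (F a z - (1 - \<theta>) * q)" by (simp add: algebra_simps)
    then have "F a x \<le> F a z - (1 - \<theta>) * q" using t0 by simp
    then show ?thesis by (simp add: algebra_simps)
  qed
  have "F a x + q \<le> F a z"
  proof (rule field_le_epsilon)
    fix e :: real assume e: "0 < e"
    define \<theta> where "\<theta> = min 1 (e / (q + 1))"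
    have t0: "0 < \<theta>" using e q0 by (simp add: \<theta>_def)
    have t1: "\<theta> \<le> 1" by (simp add: \<theta>_def)
    have "\<theta> * q \<le> e / (q + 1) * q" unfolding \<theta>_def by (rule mult_right_mono[OF min.cobounded2 q0])
    also have "\<dots> \<le> e" using e q0 by (simp add: field_simps)
    finally show "F a x + q \<le> F a z + e" using key[OF t0 t1] by simp
  qed
  then show ?thesis by (simp add: q_def)
qed

lemma stability:
  assumes ma: "ismin a x" and mb: "ismin b y" and c0: "0 \<le> c"
    and bd: "\<And>v. (b - a) \<bullet> v \<le> c * N v"
  shows "N (x - y) \<le> \<eta> * c"
proof -
  have x: "x \<in> X" and y: "y \<in> X" using ma mb by (auto simp: ismin_def)
  define u where "u = N (x - y)"
  have u0: "u \<ge> 0" using isn_nn[OF nrm] by (simp add: u_def)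
  have uc: "N (y - x) = u" using isn_commute[OF nrm] by (simp add: u_def)
  have g1: "F a x + u\<^sup>2 / (2 * \<eta>) \<le> F a y" using growth[OF ma y] uc by simp
  have g2: "F b y + u\<^sup>2 / (2 * \<eta>) \<le> F b x" using growth[OF mb x] by (simp add: u_def)
  have "u\<^sup>2 / \<eta> = u\<^sup>2 / (2 * \<eta>) + u\<^sup>2 / (2 * \<eta>)" by (simp add: field_simps)
  also have "\<dots> \<le> F a y - F a x + F b x - F b y" using g1 g2 by simp
  also have "\<dots> = (b - a) \<bullet> (x - y)" by (simp add: F_def algebra_simps)
  also have "\<dots> \<le> c * u" using bd[of "x - y"] by (simp add: u_def)
  finally have "u\<^sup>2 / \<eta> \<le> c * u" .
  then have "u * u \<le> (\<eta> * c) * u" using eta by (simp add: field_simps power2_eq_square)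
  then show ?thesis
  proof (cases "u = 0")
    case True then show ?thesis using eta c0 by (simp add: u_def)
  next
    case False then have "u > 0" using u0 by simp
    then show ?thesis using \<open>u * u \<le> (\<eta> * c) * u\<close> by (simp add: u_def)
  qed
qed


lemma lower_bound: "\<exists>L. \<forall>z\<in>X. L \<le> F a z"
proof -
  obtain c0 where c0: "c0 > 0" and cN: "\<And>v. c0 * norm v \<le> N v" using isn_lower[OF nrm] by blast
  obtain x0 where x0: "x0 \<in> X" using Xne by blast
  define \<beta> where "\<beta> = norm a / c0"
  have b0: "\<beta> \<ge> 0" using c0 by (simp add: \<beta>_def)
  define L where "L = - \<beta>\<^sup>2 * \<eta> - norm a * norm x0 - hr x0 / \<eta>"
  have "L \<le> F a z" if z: "z \<in> X" for z
  proof -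
    define u where "u = N (z - x0)"
    have u0: "u \<ge> 0" using isn_nn[OF nrm] by (simp add: u_def)
    have "hr ((1/2) *\<^sub>R z + (1 - 1/2) *\<^sub>R x0) \<le> 1/2 * hr z + (1 - 1/2) * hr x0 - 1/2 * (1 - 1/2) / 2 * u\<^sup>2"
      using sc_real[OF z x0, of "1/2"] by (simp add: u_def)
    then have hz: "hr z \<ge> u\<^sup>2 / 4 - hr x0" using hr_nn[of "(1/2) *\<^sub>R z + (1 - 1/2) *\<^sub>R x0"] by simp
    have "norm z \<le> norm (z - x0) + norm x0" using norm_triangle_ineq[of "z - x0" x0] by simp
    also have "norm (z - x0) \<le> u / c0" using cN[of "z - x0"] c0 by (simp add: u_def field_simps)
    finally have nz: "norm z \<le> u / c0 + norm x0" by simp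
    have "- (a \<bullet> z) \<le> norm a * norm z"
      using norm_cauchy_schwarz[of a "-z"] by simp
    also have "\<dots> \<le> norm a * (u / c0 + norm x0)" using nz by (simp add: mult_left_mono)
    finally have az: "a \<bullet> z \<ge> - (\<beta> * u) - norm a * norm x0" by (simp add: \<beta>_def algebra_simps)
    have hz': "hr z / \<eta> \<ge> (u\<^sup>2 / 4 - hr x0) / \<eta>" using hz eta by (simp add: divide_right_mono)
    have sq: "0 \<le> (u - 2 * \<beta> * \<eta>)\<^sup>2 / (4 * \<eta>)" using eta by simp
    have "(u - 2 * \<beta> * \<eta>)\<^sup>2 / (4 * \<eta>) = u\<^sup>2 / (4 * \<eta>) - \<beta> * u + \<beta>\<^sup>2 * \<eta>"
      using eta by (simp add: field_simps power2_eq_square)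
    then have "u\<^sup>2 / (4 * \<eta>) - \<beta> * u \<ge> - \<beta>\<^sup>2 * \<eta>" using sq by linarith
    moreover have "(u\<^sup>2 / 4 - hr x0) / \<eta> = u\<^sup>2 / (4 * \<eta>) - hr x0 / \<eta>" using eta by (simp add: field_simps)
    ultimately show ?thesis using az hz' unfolding F_def L_def by linarith
  qed
  then show ?thesis by blast
qed

lemma exists_min: "\<exists>x. ismin a x"
proof -
  obtain c0 where c0: "c0 > 0" and cN: "\<And>v. c0 * norm v \<le> N v" using isn_lower[OF nrm] by blast
  obtain L where L: "\<And>z. z \<in> X \<Longrightarrow> L \<le> F a z" using lower_bound by blast
  have bdd: "bdd_below (F a ` X)" using L by (metis bdd_belowI2)
  define m where "m = Inf (F a ` X)"
  have mle: "\<And>z. z \<in> X \<Longrightarrow> m \<le> F a z" unfolding m_def using cINF_lower[OF bdd] by blast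
  have "\<forall>n. \<exists>z. z \<in> X \<and> F a z < m + inverse (real (Suc n))"
  proof
    fix n
    have "m < m + inverse (real (Suc n))" by simp
    then show "\<exists>z. z \<in> X \<and> F a z < m + inverse (real (Suc n))"
      unfolding m_def using cINF_less_iff[OF Xne bdd] by blast
  qed
  then obtain zs where zsX: "\<And>n. zs n \<in> X" and zsF: "\<And>n. F a (zs n) < m + inverse (real (Suc n))"
    by metis
  have close: "(N (zs n - zs k))\<^sup>2 < 4 * \<eta> * (inverse (real (Suc n)) + inverse (real (Suc k)))" for n k
  proof -
    define w where "w = (1/2) *\<^sub>R zs n + (1 - 1/2) *\<^sub>R zs k"
    have w: "w \<in> X" unfolding w_def by (rule convexD[OF Xv zsX zsX]) auto
    have "hr w \<le> 1/2 * hr (zs n) + (1 - 1/2) * hr (zs k) - 1/2 * (1 - 1/2) / 2 * (N (zs n - zs k))\<^sup>2"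
      unfolding w_def by (rule sc_real[OF zsX zsX]) auto
    then have "hr w / \<eta> \<le> (1/2 * hr (zs n) + 1/2 * hr (zs k) - 1/8 * (N (zs n - zs k))\<^sup>2) / \<eta>"
      using eta by (simp add: divide_right_mono)
    moreover have "F a w = 1/2 * (a \<bullet> zs n) + 1/2 * (a \<bullet> zs k) + hr w / \<eta>"
      by (simp add: F_def w_def inner_add_right)
    moreover have "(1/2 * hr (zs n) + 1/2 * hr (zs k) - 1/8 * (N (zs n - zs k))\<^sup>2) / \<eta>
        = 1/2 * (hr (zs n) / \<eta>) + 1/2 * (hr (zs k) / \<eta>) - (N (zs n - zs k))\<^sup>2 / (8 * \<eta>)"
      using eta by (simp add: field_simps)
    moreover have "1/2 * F a (zs n) + 1/2 * F a (zs k) = 1/2 * (a \<bullet> zs n) + 1/2 * (a \<bullet> zs k) + (1/2 * (hr (zs n) / \<eta>) + 1/2 * (hr (zs k) / \<eta>))"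
      by (simp add: F_def algebra_simps)
    ultimately have "F a w \<le> 1/2 * F a (zs n) + 1/2 * F a (zs k) - (N (zs n - zs k))\<^sup>2 / (8 * \<eta>)"
      by linarith
    moreover have "m \<le> F a w" using mle[OF w] .
    ultimately have "(N (zs n - zs k))\<^sup>2 / (8 * \<eta>) < 1/2 * (inverse (real (Suc n)) + inverse (real (Suc k)))"
      using zsF[of n] zsF[of k] unfolding distrib_left by linarith
    then have "(N (zs n - zs k))\<^sup>2 < (1/2 * (inverse (real (Suc n)) + inverse (real (Suc k)))) * (8 * \<eta>)"
      using eta by (simp only: pos_divide_less_eq[of "8 * \<eta>"])
    then show ?thesis by (simp add: algebra_simps)
  qed
  have "Cauchy zs"
  proof (rule metric_CauchyI)
    fix e :: real assume e: "0 < e"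
    obtain K :: nat where K: "8 * \<eta> / (c0 * e)\<^sup>2 < real K" using reals_Archimedean2 by blast
    have Kpos: "real K > 0" proof -
      have "0 < 8 * \<eta> / (c0 * e)\<^sup>2" using eta c0 e by simp
      then show ?thesis using K by linarith
    qed
    show "\<exists>M. \<forall>m\<ge>M. \<forall>n\<ge>M. dist (zs m) (zs n) < e"
    proof (intro exI allI impI)
      fix n k assume n: "K \<le> n" and k: "K \<le> k"
      have "inverse (real (Suc n)) \<le> inverse (real K)" using n Kpos by (simp add: le_imp_inverse_le)
      moreover have "inverse (real (Suc k)) \<le> inverse (real K)" using k Kpos by (simp add: le_imp_inverse_le)
      ultimately have "(N (zs n - zs k))\<^sup>2 < 4 * \<eta> * (2 * inverse (real K))"
        using close[of n k] eta by (smt (verit) mult_left_mono)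
      also have "\<dots> = 8 * \<eta> / real K" by (simp add: field_simps)
      also have "\<dots> < (c0 * e)\<^sup>2" using K Kpos c0 e eta by (simp add: field_simps)
      finally have "N (zs n - zs k) < c0 * e"
        using c0 e by (simp add: power_less_imp_less_base)
      moreover have "c0 * norm (zs n - zs k) \<le> N (zs n - zs k)" by (rule cN)
      ultimately have "c0 * norm (zs n - zs k) < c0 * e" by linarith
      then show "dist (zs n) (zs k) < e" using c0 by (simp add: dist_norm)
    qed
  qed
  then obtain zl where lim: "zs \<longlonglongrightarrow> zl" using Cauchy_convergent_iff convergent_def by blast
  have zl: "zl \<in> X" using closed_sequentially[OF Xc zsX lim] .
  have "F a zl \<le> m"
  proof (rule ccontr)
    assume "\<not> F a zl \<le> m"
    then have d: "F a zl - m > 0" by simp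
    define \<delta> where "\<delta> = F a zl - m"
    have d0: "\<delta> > 0" using d by (simp add: \<delta>_def)
    define c where "c = ereal (hr zl - \<eta> * \<delta> / 4)"
    have "c < h zl" using h_fin[OF zl] eta d0 by (simp add: c_def)
    then have "eventually (\<lambda>y. c < h y) (at zl)" using lsc unfolding lsc_fun_def by blast
    then have "eventually (\<lambda>y. y \<noteq> zl \<longrightarrow> y \<in> UNIV \<longrightarrow> c < h y) (nhds zl)"
      using eventually_at_filter[of "\<lambda>y. c < h y" zl UNIV] by simp
    then have "eventually (\<lambda>y. c < h y) (nhds zl)"
      by (rule eventually_mono) (use \<open>c < h zl\<close> in auto)
    then have e1: "eventually (\<lambda>n. c < h (zs n)) sequentially"
      using lim unfolding filterlim_iff by blast
    have "(\<lambda>n. a \<bullet> zs n) \<longlonglongrightarrow> a \<bullet> zl" by (intro tendsto_intros lim)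
    then have e2: "eventually (\<lambda>n. a \<bullet> zl - \<delta>/4 < a \<bullet> zs n) sequentially"
      using d0 by (intro order_tendstoD(1)) auto
    have e3: "eventually (\<lambda>n. inverse (real (Suc n)) < \<delta>/2) sequentially"
      using d0 by (intro order_tendstoD(2)[OF LIMSEQ_inverse_real_of_nat]) auto
    obtain n where n1: "c < h (zs n)" and n2: "a \<bullet> zl - \<delta>/4 < a \<bullet> zs n"
        and n3: "inverse (real (Suc n)) < \<delta>/2"
    proof -
      have "eventually (\<lambda>n. c < h (zs n) \<and> a \<bullet> zl - \<delta>/4 < a \<bullet> zs n \<and> inverse (real (Suc n)) < \<delta>/2) sequentially"
        using e1 e2 e3 by (auto intro: eventually_conj)
      then obtain K where "\<And>n. n \<ge> K \<Longrightarrow> c < h (zs n) \<and> a \<bullet> zl - \<delta>/4 < a \<bullet> zs n \<and> inverse (real (Suc n)) < \<delta>/2"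
        unfolding eventually_sequentially by blast
      then show ?thesis using that by blast
    qed
    have "hr zl - \<eta> * \<delta> / 4 < hr (zs n)" using n1 h_fin[OF zsX[of n]] by (simp add: c_def)
    then have "(hr zl - \<eta> * \<delta> / 4) / \<eta> < hr (zs n) / \<eta>" using eta by (simp add: divide_strict_right_mono)
    then have "hr zl / \<eta> - \<delta> / 4 < hr (zs n) / \<eta>" using eta by (simp add: field_simps)
    then have "F a zl - \<delta>/2 < F a (zs n)" using n2 by (simp add: F_def)
    moreover have "F a (zs n) < m + \<delta>/2" using zsF[of n] n3 by linarith
    ultimately show False unfolding \<delta>_def by (simp add: field_simps)
  qed
  then show ?thesis unfolding ismin_def using zl mle by force
qed
end



lemma comb_bound:
  fixes M :: "nat \<Rightarrow> nat" and T \<tau> :: nat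
  shows "(\<Sum>t=1..T. real (M t) * real (\<Sum>s\<in>{s\<in>{1..T}. s+1 \<le> t \<and> t \<le> s+\<tau>}. M s))
     \<le> real \<tau> * (\<Sum>t=1..T. (real (M t))\<^sup>2)"
proof -
  let ?W = "\<lambda>t. {s\<in>{1..T}. s+1 \<le> t \<and> t \<le> s+\<tau>}"
  let ?q = "\<lambda>t. (real (M t))\<^sup>2"
  have c1: "card (?W t) \<le> \<tau>" for t
  proof -
    have "?W t \<subseteq> {t-\<tau>..<t}" by auto
    then have "card (?W t) \<le> card {t-\<tau>..<t}" by (rule card_mono[rotated]) simp
    then show ?thesis by simp
  qed
  have c2: "card {t\<in>{1..T}. s+1 \<le> t \<and> t \<le> s+\<tau>} \<le> \<tau>" for s
  proof -
    have "{t\<in>{1..T}. s+1 \<le> t \<and> t \<le> s+\<tau>} \<subseteq> {s+1..<s+1+\<tau>}" by auto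
    then have "card {t\<in>{1..T}. s+1 \<le> t \<and> t \<le> s+\<tau>} \<le> card {s+1..<s+1+\<tau>}" by (rule card_mono[rotated]) simp
    then show ?thesis by simp
  qed
  have "(\<Sum>t=1..T. real (M t) * real (\<Sum>s\<in>?W t. M s)) = (\<Sum>t=1..T. \<Sum>s\<in>?W t. real (M t) * real (M s))"
    by (simp add: sum_distrib_left)
  also have "\<dots> \<le> (\<Sum>t=1..T. \<Sum>s\<in>?W t. (?q t + ?q s) / 2)"
  proof (intro sum_mono)
    fix t s
    have "0 \<le> (real (M t) - real (M s))\<^sup>2" by simp
    then show "real (M t) * real (M s) \<le> (?q t + ?q s) / 2" by (simp add: power2_eq_square algebra_simps)
  qed
  also have "\<dots> = (\<Sum>t=1..T. real (card (?W t)) * ?q t) / 2 + (\<Sum>t=1..T. \<Sum>s\<in>?W t. ?q s) / 2"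
    by (simp add: sum.distrib sum_divide_distrib add_divide_distrib)
  also have "(\<Sum>t=1..T. \<Sum>s\<in>?W t. ?q s) = (\<Sum>s=1..T. \<Sum>t\<in>{t\<in>{1..T}. s+1 \<le> t \<and> t \<le> s+\<tau>}. ?q s)"
    by (rule sum.swap_restrict) auto
  also have "\<dots> = (\<Sum>s=1..T. real (card {t\<in>{1..T}. s+1 \<le> t \<and> t \<le> s+\<tau>}) * ?q s)" by simp
  also have "\<dots> \<le> (\<Sum>s=1..T. real \<tau> * ?q s)"
    by (intro sum_mono mult_right_mono) (use c2 in auto)
  also have "(\<Sum>t=1..T. real (card (?W t)) * ?q t) \<le> (\<Sum>t=1..T. real \<tau> * ?q t)"
    by (intro sum_mono mult_right_mono) (use c1 in auto)
  finally show ?thesis by (simp add: sum_distrib_left)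
qed



theorem theorem3:
  fixes N :: "'v::euclidean_space \<Rightarrow> real"
    and X :: "'v set" and h :: "'v \<Rightarrow> ereal"
    and T \<tau> :: nat and M :: "nat \<Rightarrow> nat"
    and f :: "nat \<Rightarrow> nat \<Rightarrow> 'v \<Rightarrow> real"   \<comment> \<open>f t i = f^i_t\<close>
    and x g :: "nat \<Rightarrow> nat \<Rightarrow> 'v"          \<comment> \<open>x t i = x^i_t, g t i = g^i_t\<close>
    and S :: "nat \<Rightarrow> nat \<Rightarrow> (nat \<times> nat) set" \<comment> \<open>S t i = S^i_t, pairs (agent, time)\<close>
    and G r :: real and p :: 'v and jr :: "nat \<Rightarrow> nat"
  assumes norm: "is_norm N"
    and X_closed: "closed X" and X_convex: "convex X"
    and h_lsc: "lsc_fun h" and h_sc: "strongly_convex_on X N h"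
    and X_dom: "X \<subseteq> edom h"
    and h_sel: "has_continuous_subgrad_selection h"
    and h_nonneg: "\<And>y. h y \<ge> 0"
    and T_pos: "T \<ge> 1" and G_pos: "G > 0" and r_pos: "r > 0"
    and M_pos: "\<And>t. 1 \<le> t \<Longrightarrow> t \<le> T \<Longrightarrow> M t \<ge> 1"
    and f_convex: "\<And>t i. 1 \<le> t \<Longrightarrow> t \<le> T \<Longrightarrow> 1 \<le> i \<Longrightarrow> i \<le> M t \<Longrightarrow> convex_on UNIV (f t i)"
    and f_lip: "\<And>t i. 1 \<le> t \<Longrightarrow> t \<le> T \<Longrightarrow> 1 \<le> i \<Longrightarrow> i \<le> M t \<Longrightarrow> lipschitz_wrt N G (f t i)"
    and g_sub: "\<And>t i. 1 \<le> t \<Longrightarrow> t \<le> T \<Longrightarrow> 1 \<le> i \<Longrightarrow> i \<le> M t \<Longrightarrow> g t i \<in> subgrad (f t i) (x t i)"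
    and S_ok: "\<And>t i. 1 \<le> t \<Longrightarrow> t \<le> T \<Longrightarrow> 1 \<le> i \<Longrightarrow> i \<le> M t \<Longrightarrow> feedback_ok M t (S t i)"
    and delay: "\<And>t i s j. 1 \<le> t \<Longrightarrow> t \<le> T \<Longrightarrow> 1 \<le> i \<Longrightarrow> i \<le> M t \<Longrightarrow>
                  1 \<le> s \<Longrightarrow> s + \<tau> + 1 \<le> t \<Longrightarrow> 1 \<le> j \<Longrightarrow> j \<le> M s \<Longrightarrow> (j, s) \<in> S t i"
    and dda: "\<And>t i. 1 \<le> t \<Longrightarrow> t \<le> T \<Longrightarrow> 1 \<le> i \<Longrightarrow> i \<le> M t \<Longrightarrow>
                dda_argmin X h (r / (G * Mbar M T * sqrt ((2 * real \<tau> + 1) * real T))) g (S t i) (x t i)"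
    and p_in: "p \<in> X" and p_h: "h p \<le> ereal (r\<^sup>2)"
    and jr_ok: "\<And>t. 1 \<le> t \<Longrightarrow> t \<le> T \<Longrightarrow> 1 \<le> jr t \<and> jr t \<le> M t"
  shows "(\<Sum>t=1..T. \<Sum>i=1..M t. f t i (x t (jr t))) - (\<Sum>t=1..T. \<Sum>i=1..M t. f t i p)
           \<le> 2 * r * G * Mbar M T * sqrt ((2 * real \<tau> + 1) * real T)"
proof -
  define K where "K = 2 * real \<tau> + 1"
  define Mb where "Mb = Mbar M T"
  define \<eta> where "\<eta> = r / (G * Mb * sqrt (K * real T))"
  define SM where "SM = (\<Sum>t=1..T. (real (M t))\<^sup>2)"
  have K1: "K \<ge> 1" by (simp add: K_def)
  have SM1: "SM \<ge> 1"
  proof -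
    have "(real (M 1))\<^sup>2 \<le> SM" unfolding SM_def
      by (rule member_le_sum[of 1 "{1..T}" "\<lambda>t. (real (M t))\<^sup>2"]) (use T_pos in auto)
    moreover have "1 \<le> (real (M 1))\<^sup>2" using M_pos[of 1] T_pos by simp
    ultimately show ?thesis by linarith
  qed
  have Tpos: "real T > 0" using T_pos by simp
  have Mb2: "Mb\<^sup>2 = SM / real T" using SM1 Tpos by (simp add: Mb_def Mbar_def SM_def)
  have Mb0: "Mb > 0" using SM1 Tpos by (simp add: Mb_def Mbar_def SM_def)
  have sq0: "sqrt (K * real T) > 0" using K1 Tpos by simp
  have eta: "\<eta> > 0" using r_pos G_pos Mb0 sq0 by (simp add: \<eta>_def)
  have Xne: "X \<noteq> {}" using p_in by blast
  interpret R: dda_reg N X h \<eta>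
    using norm X_closed X_convex h_lsc h_sc X_dom h_nonneg eta Xne by unfold_locales auto

  define gt where "gt t = (\<Sum>i=1..M t. g t i)" for t
  define Gv where "Gv n = (\<Sum>t=1..n. gt t)" for n
  define A where "A t i = (\<Sum>(j,s)\<in>S t i. g s j)" for t i
  define Full where "Full n = {(k,s). 1 \<le> s \<and> s \<le> n \<and> 1 \<le> k \<and> k \<le> M s}" for n
  define Win where "Win t = {s\<in>{1..T}. s+1 \<le> t \<and> t \<le> s+\<tau>}" for t
  define W where "W t = {(k,s). s \<in> Win t \<and> 1 \<le> k \<and> k \<le> M s}" for t
  define D where "D t = real (\<Sum>s\<in>Win t. M s)" for t
  define y where "y t = (SOME z. R.ismin (Gv (t-1)) z)" for t
  have ymin: "R.ismin (Gv (t-1)) (y t)" for t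
    unfolding y_def by (rule someI_ex[OF R.exists_min])
  have yX: "y t \<in> X" for t using ymin[of t] by (simp add: R.ismin_def)
  have GN0: "0 \<le> G * N v" for v using G_pos isn_nn[OF norm, of v] by simp
  have gb: "g s k \<bullet> v \<le> G * N v" if "1 \<le> s" "s \<le> T" "1 \<le> k" "k \<le> M s" for s k v
  proof -
    have "f s k (x s k) + g s k \<bullet> ((x s k + v) - x s k) \<le> f s k (x s k + v)"
      using g_sub[OF that] unfolding subgrad_def by blast
    moreover have "\<bar>f s k (x s k + v) - f s k (x s k)\<bar> \<le> G * N ((x s k + v) - x s k)"
      using f_lip[OF that] unfolding lipschitz_wrt_def by blast
    ultimately show ?thesis by simp
  qed
  have Full_img: "Full n = (\<lambda>(s,k). (k,s)) ` (SIGMA s:{1..n}. {1..M s})" for n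
    unfolding Full_def by auto
  have inj_sw: "inj_on (\<lambda>(s::nat,k::nat). (k,s)) B" for B by (auto simp: inj_on_def)
  have Full_fin: "finite (Full n)" for n unfolding Full_img by simp
  have sum_Full: "(\<Sum>(k,s)\<in>Full n. g s k) = Gv n" for n
  proof -
    have "(\<Sum>(k,s)\<in>Full n. g s k) = (\<Sum>(s,k)\<in>(SIGMA s:{1..n}. {1..M s}). g s k)"
      unfolding Full_img by (subst sum.reindex[OF inj_sw]) (simp add: case_prod_unfold)
    also have "\<dots> = (\<Sum>s=1..n. \<Sum>k=1..M s. g s k)" by (rule sum.Sigma[symmetric]) auto
    finally show ?thesis by (simp add: Gv_def gt_def)
  qed
  have W_img: "W t = (\<lambda>(s,k). (k,s)) ` (SIGMA s:Win t. {1..M s})" for t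
    unfolding W_def by auto
  have Win_fin: "finite (Win t)" for t by (simp add: Win_def)
  have W_fin: "finite (W t)" for t unfolding W_img using Win_fin by simp
  have card_W: "real (card (W t)) = D t" for t
  proof -
    have "card (W t) = card (SIGMA s:Win t. {1..M s})"
      unfolding W_img by (rule card_image[OF inj_sw])
    also have "\<dots> = (\<Sum>s\<in>Win t. card {1..M s})" by (rule card_SigmaI) (use Win_fin in auto)
    finally show ?thesis by (simp add: D_def)
  qed
  have setb: "(\<Sum>(k,s)\<in>P. g s k) \<bullet> v \<le> real (card P) * (G * N v)" if P: "P \<subseteq> Full T" for P v
  proof -
    have "(\<Sum>(k,s)\<in>P. g s k) \<bullet> v = (\<Sum>q\<in>P. g (snd q) (fst q) \<bullet> v)"
      by (simp add: inner_sum_left case_prod_unfold)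
    also have "\<dots> \<le> real (card P) * (G * N v)"
    proof (rule sum_bounded_above)
      fix q assume "q \<in> P"
      then have "q \<in> Full T" using P by blast
      then show "g (snd q) (fst q) \<bullet> v \<le> G * N v" unfolding Full_def by (auto intro: gb)
    qed
    finally show ?thesis .
  qed
  have diffb: "((\<Sum>(k,s)\<in>P. g s k) - (\<Sum>(k,s)\<in>Q. g s k)) \<bullet> v \<le> real (card (P - Q) + card (Q - P)) * (G * N v)"
    if P: "P \<subseteq> Full T" and Q: "Q \<subseteq> Full T" for P Q v
  proof -
    have fP: "finite P" and fQ: "finite Q" using P Q Full_fin finite_subset by blast+
    let ?s = "\<lambda>B. (\<Sum>(k,s)\<in>B. g s k)"
    have "?s P = ?s (P \<inter> Q) + ?s (P - Q)" by (rule sum.Int_Diff[OF fP])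
    moreover have "?s Q = ?s (Q \<inter> P) + ?s (Q - P)" by (rule sum.Int_Diff[OF fQ])
    moreover have "Q \<inter> P = P \<inter> Q" by blast
    ultimately have "?s P - ?s Q = ?s (P - Q) - ?s (Q - P)" by simp
    then have "(?s P - ?s Q) \<bullet> v = ?s (P - Q) \<bullet> v + ?s (Q - P) \<bullet> (- v)"
      by (simp add: inner_diff_left)
    also have "\<dots> \<le> real (card (P - Q)) * (G * N v) + real (card (Q - P)) * (G * N (- v))"
      by (intro add_mono setb) (use P Q in auto)
    finally show ?thesis by (simp add: isn_neg[OF norm] distrib_right)
  qed

  have Full_mono: "Full n \<subseteq> Full T" if "n \<le> T" for n using that unfolding Full_def by auto
  have Ssub: "S t i \<subseteq> Full (t-1)" if "1 \<le> t" "t \<le> T" "1 \<le> i" "i \<le> M t" for t i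
    using S_ok[OF that] that unfolding feedback_ok_def Full_def by auto
  have Sdiff: "Full (t-1) - S t i \<subseteq> W t" if "1 \<le> t" "t \<le> T" "1 \<le> i" "i \<le> M t" for t i
  proof
    fix q assume q: "q \<in> Full (t-1) - S t i"
    obtain k s where qks: "q = (k,s)" by (cases q)
    have "1 \<le> s" "s \<le> t - 1" "1 \<le> k" "k \<le> M s" using q qks by (auto simp: Full_def)
    moreover have "\<not> s + \<tau> + 1 \<le> t" using delay[OF that \<open>1 \<le> s\<close> _ \<open>1 \<le> k\<close> \<open>k \<le> M s\<close>] q qks by auto
    ultimately show "q \<in> W t" using qks that by (auto simp: W_def Win_def)
  qed
  have xmin: "R.ismin (A t i) (x t i)" if "1 \<le> t" "t \<le> T" "1 \<le> i" "i \<le> M t" for t i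
  proof -
    have d: "x t i \<in> X \<and> (\<forall>z\<in>X. ereal (\<Sum>(j, s)\<in>S t i. g s j \<bullet> x t i) + h (x t i) / ereal \<eta>
             \<le> ereal (\<Sum>(j, s)\<in>S t i. g s j \<bullet> z) + h z / ereal \<eta>)"
      using dda[OF that] unfolding dda_argmin_def \<eta>_def K_def Mb_def by simp
    have lin: "(\<Sum>(j, s)\<in>S t i. g s j \<bullet> z) = A t i \<bullet> z" for z
      by (simp add: A_def inner_sum_left case_prod_unfold)
    show ?thesis unfolding R.ismin_def
    proof (intro conjI ballI)
      show "x t i \<in> X" using d by simp
      fix z assume z: "z \<in> X"
      have xi: "x t i \<in> X" using d by simp
      have "ereal (\<Sum>(j, s)\<in>S t i. g s j \<bullet> x t i) + h (x t i) / ereal \<eta>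
             \<le> ereal (\<Sum>(j, s)\<in>S t i. g s j \<bullet> z) + h z / ereal \<eta>" using d z by blast
      then have "ereal (A t i \<bullet> x t i) + ereal (R.hr (x t i)) / ereal \<eta> \<le> ereal (A t i \<bullet> z) + ereal (R.hr z) / ereal \<eta>"
        unfolding lin R.h_fin[OF z] R.h_fin[OF xi] .
      moreover have "ereal a + ereal b / ereal \<eta> = ereal (a + b / \<eta>)" for a b
        using eta by simp
      ultimately show "R.F (A t i) (x t i) \<le> R.F (A t i) z" by (simp add: R.F_def)
    qed
  qed
  have xX: "x t i \<in> X" if "1 \<le> t" "t \<le> T" "1 \<le> i" "i \<le> M t" for t i
    using xmin[OF that] by (simp add: R.ismin_def)
  have D0: "0 \<le> D t" for t unfolding D_def by (rule of_nat_0_le_iff)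
  have stab1: "N (x t i - y t) \<le> \<eta> * (G * D t)" if tt: "1 \<le> t" "t \<le> T" "1 \<le> i" "i \<le> M t" for t i
  proof (rule R.stability[OF xmin[OF tt] ymin])
    show "0 \<le> G * D t" using G_pos D0 by simp
    fix v
    have sub1: "Full (t-1) \<subseteq> Full T" using tt by (intro Full_mono) simp
    have sub2: "S t i \<subseteq> Full T" using Ssub[OF tt] sub1 by blast
    have "(Gv (t-1) - A t i) \<bullet> v = ((\<Sum>(k,s)\<in>Full (t-1). g s k) - (\<Sum>(k,s)\<in>S t i. g s k)) \<bullet> v"
      by (simp add: sum_Full A_def)
    also have "\<dots> \<le> real (card (Full (t-1) - S t i) + card (S t i - Full (t-1))) * (G * N v)"
      by (rule diffb[OF sub1 sub2])
    also have "card (S t i - Full (t-1)) = 0" using Ssub[OF tt] by (simp add: Diff_eq_empty_iff[THEN iffD2])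
    also have "card (Full (t-1) - S t i) \<le> card (W t)" by (rule card_mono[OF W_fin Sdiff[OF tt]])
    then have "real (card (Full (t-1) - S t i) + 0) * (G * N v) \<le> real (card (W t)) * (G * N v)"
      using GN0 by (intro mult_right_mono) auto
    finally show "(Gv (t-1) - A t i) \<bullet> v \<le> G * D t * N v" by (simp add: card_W mult_ac)
  qed
  have stab2: "N (x t j - x t i) \<le> \<eta> * (G * D t)"
    if tt: "1 \<le> t" "t \<le> T" "1 \<le> i" "i \<le> M t" and jj: "1 \<le> j" "j \<le> M t" for t i j
  proof (rule R.stability[OF xmin[OF tt(1,2) jj] xmin[OF tt]])
    show "0 \<le> G * D t" using G_pos D0 by simp
    fix v
    have sub1: "Full (t-1) \<subseteq> Full T" using tt by (intro Full_mono) simp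
    have subi: "S t i \<subseteq> Full T" using Ssub[OF tt] sub1 by blast
    have subj: "S t j \<subseteq> Full T" using Ssub[OF tt(1,2) jj] sub1 by blast
    have "(A t i - A t j) \<bullet> v = ((\<Sum>(k,s)\<in>S t i. g s k) - (\<Sum>(k,s)\<in>S t j. g s k)) \<bullet> v"
      by (simp add: A_def)
    also have "\<dots> \<le> real (card (S t i - S t j) + card (S t j - S t i)) * (G * N v)"
      by (rule diffb[OF subi subj])
    also have "card (S t i - S t j) + card (S t j - S t i) = card ((S t i - S t j) \<union> (S t j - S t i))"
      using subi subj Full_fin finite_subset by (subst card_Un_disjoint) blast+
    also have "card ((S t i - S t j) \<union> (S t j - S t i)) \<le> card (W t)"
      using Ssub[OF tt] Ssub[OF tt(1,2) jj] Sdiff[OF tt] Sdiff[OF tt(1,2) jj]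
      by (intro card_mono[OF W_fin]) blast
    then have "real (card ((S t i - S t j) \<union> (S t j - S t i))) * (G * N v) \<le> real (card (W t)) * (G * N v)"
      using GN0 by (intro mult_right_mono) auto
    finally show "(A t i - A t j) \<bullet> v \<le> G * D t * N v" by (simp add: card_W mult_ac)
  qed
  have Gv_Suc: "Gv t = Gv (t-1) + gt t" if t1: "1 \<le> t" for t
  proof -
    obtain n where "t = Suc n" using t1 by (cases t) simp_all
    then show ?thesis by (simp add: Gv_def)
  qed
  have gtb: "gt t \<bullet> v \<le> real (M t) * (G * N v)" if "1 \<le> t" "t \<le> T" for t v
  proof -
    have "gt t \<bullet> v = (\<Sum>i=1..M t. g t i \<bullet> v)" by (simp add: gt_def inner_sum_left)
    also have "\<dots> \<le> real (card {1..M t}) * (G * N v)"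
      by (rule sum_bounded_above) (use that in \<open>auto intro: gb\<close>)
    finally show ?thesis by simp
  qed
  have stab3: "N (y t - y (t+1)) \<le> \<eta> * (G * real (M t))" if tt: "1 \<le> t" "t \<le> T" for t
  proof (rule R.stability[OF ymin ymin])
    show "0 \<le> G * real (M t)" using G_pos by simp
    fix v
    have "(Gv (t + 1 - 1) - Gv (t - 1)) \<bullet> v = gt t \<bullet> v" using Gv_Suc[OF tt(1)] by simp
    also have "\<dots> \<le> G * real (M t) * N v" using gtb[OF tt] by (simp add: algebra_simps)
    finally show "(Gv (t + 1 - 1) - Gv (t - 1)) \<bullet> v \<le> G * real (M t) * N v" .
  qed

  have pt: "f t i (x t (jr t)) - f t i p \<le> g t i \<bullet> (y t - p) + 2 * (G * (\<eta> * (G * D t)))"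
    if tt: "1 \<le> t" "t \<le> T" "1 \<le> i" "i \<le> M t" for t i
  proof -
    let ?j = "jr t"
    have jj: "1 \<le> ?j" "?j \<le> M t" using jr_ok tt by auto
    have l1: "\<bar>f t i (x t ?j) - f t i (x t i)\<bar> \<le> G * N (x t ?j - x t i)"
      using f_lip[OF tt] unfolding lipschitz_wrt_def by blast
    have l2: "f t i (x t i) + g t i \<bullet> (p - x t i) \<le> f t i p"
      using g_sub[OF tt] unfolding subgrad_def by blast
    have l3: "g t i \<bullet> (x t i - y t) \<le> G * N (x t i - y t)" using gb[OF tt] .
    have s1: "G * N (x t i - y t) \<le> G * (\<eta> * (G * D t))"
      using stab1[OF tt] G_pos by (intro mult_left_mono) auto
    have s2: "G * N (x t ?j - x t i) \<le> G * (\<eta> * (G * D t))"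
      using stab2[OF tt jj] G_pos by (intro mult_left_mono) auto
    have e: "g t i \<bullet> (p - x t i) = - (g t i \<bullet> (x t i - y t)) - g t i \<bullet> (y t - p)"
      by (simp add: inner_diff_right)
    show ?thesis using l1 l2 l3 s1 s2 e by linarith
  qed
  have pt_sum: "(\<Sum>i=1..M t. f t i (x t (jr t)) - f t i p) \<le> gt t \<bullet> (y t - p) + real (M t) * (2 * (G * (\<eta> * (G * D t))))"
    if tt: "1 \<le> t" "t \<le> T" for t
  proof -
    have "(\<Sum>i=1..M t. f t i (x t (jr t)) - f t i p) \<le> (\<Sum>i=1..M t. g t i \<bullet> (y t - p) + 2 * (G * (\<eta> * (G * D t))))"
      by (rule sum_mono) (use tt pt in auto)
    also have "\<dots> = gt t \<bullet> (y t - p) + real (M t) * (2 * (G * (\<eta> * (G * D t))))"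
      by (simp add: sum.distrib gt_def inner_sum_left)
    finally show ?thesis .
  qed
  have btl: "n \<le> T \<Longrightarrow> (\<Sum>t=1..n. gt t \<bullet> y (t+1)) + R.hr (y 1) / \<eta> \<le> R.F (Gv n) (y (n+1))" for n
  proof (induction n)
    case 0 then show ?case by (simp add: Gv_def R.F_def)
  next
    case (Suc n)
    then have IH: "(\<Sum>t=1..n. gt t \<bullet> y (t+1)) + R.hr (y 1) / \<eta> \<le> R.F (Gv n) (y (n+1))" by simp
    have "R.F (Gv n) (y (n+1)) \<le> R.F (Gv n) (y (Suc n + 1))"
      using ymin[of "n+1"] yX[of "Suc n + 1"] unfolding R.ismin_def by simp
    moreover have "R.F (Gv (Suc n)) (y (Suc n + 1)) = R.F (Gv n) (y (Suc n + 1)) + gt (Suc n) \<bullet> y (Suc n + 1)"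
      by (simp add: Gv_def R.F_def inner_add_left)
    ultimately show ?case using IH by simp
  qed
  have hp: "R.hr p \<le> r\<^sup>2" using p_h R.h_fin[OF p_in] by simp
  have ftrl: "(\<Sum>t=1..T. gt t \<bullet> (y t - p)) \<le> r\<^sup>2 / \<eta> + (\<Sum>t=1..T. \<eta> * G\<^sup>2 * (real (M t))\<^sup>2)"
  proof -
    have e1: "(\<Sum>t=1..T. gt t \<bullet> y (t+1)) + R.hr (y 1) / \<eta> \<le> R.F (Gv T) p"
      using btl[of T] ymin[of "T+1"] p_in unfolding R.ismin_def by force
    have e2: "R.F (Gv T) p = (\<Sum>t=1..T. gt t \<bullet> p) + R.hr p / \<eta>"
      by (simp add: R.F_def Gv_def inner_sum_left)
    have e3: "R.hr p / \<eta> \<le> r\<^sup>2 / \<eta>" using hp eta by (simp add: divide_right_mono)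
    have e4: "0 \<le> R.hr (y 1) / \<eta>" using R.hr_nn eta by simp
    have e5: "gt t \<bullet> (y t - y (t+1)) \<le> \<eta> * G\<^sup>2 * (real (M t))\<^sup>2" if tt: "1 \<le> t" "t \<le> T" for t
    proof -
      have "gt t \<bullet> (y t - y (t+1)) \<le> real (M t) * (G * N (y t - y (t+1)))" by (rule gtb[OF tt])
      also have "\<dots> \<le> real (M t) * (G * (\<eta> * (G * real (M t))))"
        using stab3[OF tt] G_pos by (intro mult_left_mono) auto
      finally show ?thesis by (simp add: power2_eq_square mult_ac)
    qed
    have "(\<Sum>t=1..T. gt t \<bullet> (y t - p)) = (\<Sum>t=1..T. gt t \<bullet> (y t - y (t+1))) + (\<Sum>t=1..T. gt t \<bullet> y (t+1)) - (\<Sum>t=1..T. gt t \<bullet> p)"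
      by (simp add: inner_diff_right sum_subtractf)
    also have "(\<Sum>t=1..T. gt t \<bullet> (y t - y (t+1))) \<le> (\<Sum>t=1..T. \<eta> * G\<^sup>2 * (real (M t))\<^sup>2)"
      by (rule sum_mono) (use e5 in auto)
    finally show ?thesis using e1 e2 e3 e4 by linarith
  qed

  have comb: "(\<Sum>t=1..T. real (M t) * D t) \<le> real \<tau> * SM"
    using comb_bound[of M T \<tau>] by (simp add: D_def Win_def SM_def)
  have "(\<Sum>t=1..T. \<Sum>i=1..M t. f t i (x t (jr t))) - (\<Sum>t=1..T. \<Sum>i=1..M t. f t i p)
      = (\<Sum>t=1..T. \<Sum>i=1..M t. f t i (x t (jr t)) - f t i p)"
    by (simp add: sum_subtractf)
  also have "\<dots> \<le> (\<Sum>t=1..T. gt t \<bullet> (y t - p) + real (M t) * (2 * (G * (\<eta> * (G * D t)))))"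
    by (rule sum_mono) (use pt_sum in auto)
  also have "\<dots> = (\<Sum>t=1..T. gt t \<bullet> (y t - p)) + 2 * \<eta> * G\<^sup>2 * (\<Sum>t=1..T. real (M t) * D t)"
    by (simp add: sum.distrib sum_distrib_left power2_eq_square mult_ac)
  also have "\<dots> \<le> r\<^sup>2 / \<eta> + (\<Sum>t=1..T. \<eta> * G\<^sup>2 * (real (M t))\<^sup>2) + 2 * \<eta> * G\<^sup>2 * (real \<tau> * SM)"
    using ftrl comb eta by (intro add_mono mult_left_mono) auto
  also have "\<dots> = r\<^sup>2 / \<eta> + \<eta> * G\<^sup>2 * K * SM"
    by (simp add: SM_def K_def sum_distrib_left algebra_simps)
  also have "\<dots> = 2 * r * G * Mb * sqrt (K * real T)"
  proof -
    have sq: "(sqrt (K * real T))\<^sup>2 = K * real T" using K1 Tpos by simp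
    have SMe: "SM = Mb\<^sup>2 * real T" using Mb2 Tpos by simp
    have a1: "r\<^sup>2 / \<eta> = r * G * Mb * sqrt (K * real T)"
      using r_pos G_pos Mb0 sq0 by (simp add: \<eta>_def power2_eq_square field_simps)
    have a2: "\<eta> * G\<^sup>2 * K * SM = r * G * Mb * sqrt (K * real T)"
    proof -
      have "\<eta> * G\<^sup>2 * K * SM = r * G * Mb * (K * real T) / sqrt (K * real T)"
        using r_pos G_pos Mb0 sq0 by (simp add: \<eta>_def SMe power2_eq_square field_simps)
      also have "\<dots> = r * G * Mb * sqrt (K * real T)"
      proof -
        have "(K * real T) / sqrt (K * real T) = sqrt (K * real T)"
          using K1 Tpos by (intro real_div_sqrt) simp
        then show ?thesis by (metis times_divide_eq_right)
      qed
      finally show ?thesis .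
    qed
    show ?thesis using a1 a2 by simp
  qed
  finally show ?thesis by (simp add: K_def Mb_def)
qed

end
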